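(* Let $n\in\mathbb{Z}^+$ and let $P_n$ denote the $n$-th Pell number, defined by $P_0=0$, $P_1=1$ and $P_n=2P_{n-1}+P_{n-2}$ for $n>1$. Then $$P_n = \left((3^n+1)^{n-1}\bmod (9^n-2)\right)\bmod (3^n-1).$$
   Context: For integers, $u\bmod m$ denotes the least non-negative remainder of $u$ upon division by $m>0$. *)

theory Defs
  imports Main
begin

fun pell :: "nat \<Rightarrow> nat" where
  "pell 0 = 0"
| "pell (Suc 0) = 1"
| "pell (Suc (Suc n)) = 2 * pell (Suc n) + pell n"

end

theory Submission
  imports Defs
begin

fun aa :: "nat \<Rightarrow> nat" where
  "aa 0 = 1"
| "aa (Suc m) = aa m + 2 * pell m"

lemma pell_Suc: "pell (Suc m) = aa m + pell m"
proof (induction m rule: pell.induct)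
  case 1 then show ?case by simp
next
  case 2 then show ?case by simp
next
  case (3 k) then show ?case by simp
qed

lemma bounds: "aa m + pell m \<le> 3 ^ m"
proof (induction m)
  case 0 then show ?case by simp
next
  case (Suc m) then show ?case by (simp add: pell_Suc)
qed

lemma key:
  fixes x :: nat
  assumes "x ^ 2 = M + 2"
  shows "\<exists>k. (x+1)^m = aa m + pell m * x + k * M"
proof (induction m)
  case 0 then show ?case by simp
next
  case (Suc m)
  then obtain k where k: "(x+1)^m = aa m + pell m * x + k * M" by blast
  have sq: "pell m * x^2 = 2 * pell m + pell m * M"
    using assms by (simp add: algebra_simps)
  have "(x+1)^Suc m = (aa m + pell m * x + k * M) * (x+1)"
    using k by simp
  also have "\<dots> = aa m + (aa m + pell m) * x + pell m * x^2 + (k * (x+1)) * M"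
    by (simp add: algebra_simps power2_eq_square)
  also have "\<dots> = aa (Suc m) + pell (Suc m) * x + (pell m + k * (x+1)) * M"
    using sq by (simp add: pell_Suc algebra_simps)
  finally show ?case by blast
qed

lemma arith_part:
  fixes t x a p M :: nat
  assumes "x = 3 * t" "t \<ge> 1" "a + p \<le> t" "x * x = M + 2"
  shows "(a + p * x + k * M) mod M mod (x - 1) = a + p"
proof -
  have "p * x \<le> (x - 2) * x" using assms by (intro mult_right_mono) auto
  moreover have "2 * x \<le> x * x" using assms by (intro mult_right_mono) auto
  moreover have "(x - 2) * x = x * x - 2 * x" by (simp add: diff_mult_distrib)
  ultimately have lt: "a + p * x < M" using assms by linarith
  have "(a + p * x + k * M) mod M = a + p * x" using lt by simp
  moreover have "a + p * x = (a + p) + p * (x - 1)"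
  proof -
    have "x = (x - 1) + 1" using assms by simp
    then have "p * x = p * (x - 1) + p" by (metis add_mult_distrib2 mult.right_neutral)
    then show ?thesis by simp
  qed
  moreover have "a + p < x - 1" using assms(1-3) by linarith
  ultimately have e: "(a + p * x + k * M) mod M = (a + p) + p * (x - 1)" and l: "a + p < x - 1"
    by (simp_all add: add.assoc)
  have "((a + p) + p * (x - 1)) mod (x - 1) = (a + p) mod (x - 1)"
    by (metis mod_mult_self1 mult.commute)
  also have "\<dots> = a + p" using l by simp
  finally show ?thesis using e by simp
qed

theorem theorem4p1:
  fixes n :: nat
  assumes "n \<ge> 1"
  shows "pell n = ((3 ^ n + 1) ^ (n - 1) mod (9 ^ n - 2)) mod (3 ^ n - 1)"
proof -
  obtain m where n: "n = Suc m" using assms by (cases n) auto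
  define x :: nat where "x = 3 ^ n"
  define t :: nat where "t = 3 ^ m"
  have x: "x = 3 * t" using n x_def t_def by simp
  have p: "t \<ge> 1" unfolding t_def by simp
  have nine: "(9::nat) ^ n = x * x"
  proof -
    have "(9::nat)^n = (3*3)^n" by simp
    also have "\<dots> = 3^n*3^n" by (rule power_mult_distrib)
    finally show ?thesis unfolding x_def .
  qed
  define M where "M = x * x - 2"
  have x3: "x \<ge> 3" using x p by simp
  have "x * x \<ge> 3 * 3" using mult_le_mono[OF x3 x3] .
  then have xM: "x * x = M + 2" unfolding M_def by simp
  obtain k where k: "(x+1)^m = aa m + pell m * x + k * M" using key[of x M] xM
    by (auto simp: power2_eq_square)
  have b: "aa m + pell m \<le> t" using bounds t_def by auto
  have "((x+1)^m mod M) mod (x - 1) = aa m + pell m"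
    unfolding k by (rule arith_part[OF x p b xM])
  then show ?thesis using n nine x_def M_def by (simp add: pell_Suc)
qed

end
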